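(* Let $w\in\mathbb{C}^k$ be a unit vector with $w_i\ne0$ for all $i\in\{1,\ldots,k\}$, let $R'$ be a tolerance relation on $\{1,\ldots,k\}$ and $T':M_k(\mathbb{C})\to A(R')$, $T'(b)=\sum_{(i,j)\in R'}E_{ii}bE_{jj}$, the corresponding truncation map. If $T'(P_w)$ is the weak density matrix of a pure state of $A(R')$ (i.e. the state $a\mapsto \mathrm{Tr}(T'(P_w)a)$ on $A(R')$ is pure), then the graph of $R'$ is connected.
   Context: A tolerance relation is a reflexive and symmetric relation; its graph has an edge between $i\ne j$ whenever $(i,j)\in R'$. $A(R')=T'(M_k(\mathbb{C}))$ is the operator system of matrices vanishing at positions outside $R'$; its states are linear functionals $\varphi$ with $\varphi(a)\ge0$ for positive semidefinite $a\in A(R')$ and $\varphi(1)=1$, and pure states are extremal states. $P_w=(w_i\overline{w_j})_{i,j}$. *)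

theory Defs
  imports "HOL-Analysis.Analysis" "HOL-Library.Complex_Order"
begin

text \<open>Indices {1..k} are modelled by a finite type 'n (k = CARD('n)).
  Matrices in M_k(C) are complex^'n^'n.\<close>

definition tolerance :: "('n \<times> 'n) set \<Rightarrow> bool" where
  "tolerance R \<longleftrightarrow> refl R \<and> sym R"

definition graph_edges :: "('n \<times> 'n) set \<Rightarrow> ('n \<times> 'n) set" where
  "graph_edges R = {(i, j). (i, j) \<in> R \<and> i \<noteq> j}"

definition graph_connected :: "('n \<times> 'n) set \<Rightarrow> bool" where
  "graph_connected R \<longleftrightarrow> (\<forall>i j. (i, j) \<in> (graph_edges R)\<^sup>*)"

definition opsys :: "('n::finite \<times> 'n) set \<Rightarrow> (complex^'n^'n) set" where
  "opsys R = {a. \<forall>i j. (i, j) \<notin> R \<longrightarrow> a $ i $ j = 0}"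

text \<open>Truncation map T(b) = sum over (i,j) in R of E_ii b E_jj.\<close>
definition trunc :: "('n::finite \<times> 'n) set \<Rightarrow> complex^'n^'n \<Rightarrow> complex^'n^'n" where
  "trunc R b = (\<chi> i j. if (i, j) \<in> R then b $ i $ j else 0)"

definition rank_one_proj :: "complex^'n \<Rightarrow> complex^'n^'n" where
  "rank_one_proj w = (\<chi> i j. w $ i * cnj (w $ j))"

text \<open>Positive semidefinite: x* a x \<ge> 0 (in the complex order, i.e. real and
  nonnegative) for all x.\<close>
definition psd :: "complex^'n::finite^'n \<Rightarrow> bool" where
  "psd a \<longleftrightarrow> (\<forall>x::complex^'n. 0 \<le> (\<Sum>i\<in>UNIV. cnj (x $ i) * (a *v x) $ i))"

text \<open>States of the operator system A(R): linear on A(R), positive, unital.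
  Functionals are represented as functions on all matrices; only their values on
  A(R) matter.\<close>
definition is_state :: "('n::finite \<times> 'n) set \<Rightarrow> (complex^'n^'n \<Rightarrow> complex) \<Rightarrow> bool" where
  "is_state R \<phi> \<longleftrightarrow>
     (\<forall>a\<in>opsys R. \<forall>b\<in>opsys R. \<phi> (a + b) = \<phi> a + \<phi> b) \<and>
     (\<forall>a\<in>opsys R. \<forall>c::complex. \<phi> ((\<chi> i j. c * a $ i $ j)) = c * \<phi> a) \<and>
     (\<forall>a\<in>opsys R. psd a \<longrightarrow> 0 \<le> \<phi> a) \<and>
     \<phi> (mat 1) = 1"

definition is_pure_state :: "('n::finite \<times> 'n) set \<Rightarrow> (complex^'n^'n \<Rightarrow> complex) \<Rightarrow> bool" where
  "is_pure_state R \<phi> \<longleftrightarrow> is_state R \<phi> \<and>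
     (\<forall>\<phi>1 \<phi>2 (t::real). is_state R \<phi>1 \<and> is_state R \<phi>2 \<and> 0 < t \<and> t < 1 \<and>
        (\<forall>a\<in>opsys R. \<phi> a = t * \<phi>1 a + (1 - t) * \<phi>2 a)
        \<longrightarrow> (\<forall>a\<in>opsys R. \<phi>1 a = \<phi> a \<and> \<phi>2 a = \<phi> a))"

end

theory Submission
  imports Defs
begin

definition pS :: "complex^'n::finite \<Rightarrow> 'n set \<Rightarrow> real" where
  "pS w S = (\<Sum>i\<in>S. (cmod (w$i))\<^sup>2)"

definition psi :: "complex^'n::finite \<Rightarrow> 'n set \<Rightarrow> complex^'n^'n \<Rightarrow> complex" where
  "psi w S a = (\<Sum>i\<in>S. \<Sum>j\<in>S. w$i * cnj (w$j) * a$j$i) / complex_of_real (pS w S)"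

lemma wcnj: "z * cnj z = complex_of_real ((cmod z)\<^sup>2)"
  using complex_norm_square by (simp add: mult.commute)

lemma psi_state:
  fixes w :: "complex^'n::finite" and R :: "('n \<times> 'n) set"
  assumes "pS w S > 0"
  shows "is_state R (psi w S)"
  unfolding is_state_def
proof (intro conjI ballI allI impI)
  fix a b :: "complex^'n^'n"
  show "psi w S (a + b) = psi w S a + psi w S b"
    unfolding psi_def by (simp add: algebra_simps sum.distrib add_divide_distrib)
next
  fix a :: "complex^'n^'n" and c :: complex
  show "psi w S (\<chi> i j. c * a $ i $ j) = c * psi w S a"
    unfolding psi_def by (simp add: algebra_simps sum_distrib_left)
next
  fix a :: "complex^'n^'n"
  assume "psd a"
  define x where "x = (\<chi> i. if i \<in> S then w$i else 0)"
  have "0 \<le> (\<Sum>j\<in>UNIV. cnj (x $ j) * (a *v x) $ j)" using \<open>psd a\<close> unfolding psd_def by blast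
  also have "\<dots> = (\<Sum>j\<in>UNIV. \<Sum>i\<in>UNIV. cnj (x $ j) * a$j$i * x$i)"
    by (simp add: matrix_vector_mult_def sum_distrib_left mult.assoc)
  also have "\<dots> = (\<Sum>j\<in>S. \<Sum>i\<in>S. cnj (w $ j) * a$j$i * w$i)"
  proof -
    have "(\<Sum>j\<in>UNIV. \<Sum>i\<in>UNIV. cnj (x $ j) * a$j$i * x$i) = (\<Sum>j\<in>UNIV. if j \<in> S then (\<Sum>i\<in>S. cnj (w $ j) * a$j$i * w$i) else 0)"
      unfolding x_def by (intro sum.cong refl) (simp add: sum.If_cases if_distrib[where f="\<lambda>z. _ * z"] cong: if_cong)
    also have "\<dots> = (\<Sum>j\<in>S. \<Sum>i\<in>S. cnj (w $ j) * a$j$i * w$i)"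
      by (simp add: sum.If_cases)
    finally show ?thesis .
  qed
  also have "\<dots> = (\<Sum>i\<in>S. \<Sum>j\<in>S. w$i * cnj (w$j) * a$j$i)"
    by (subst sum.swap) (simp add: mult_ac)
  finally have h: "0 \<le> (\<Sum>i\<in>S. \<Sum>j\<in>S. w$i * cnj (w$j) * a$j$i)" .
  have "0 \<le> complex_of_real (1 / pS w S)" using assms by (simp add: less_eq_complex_def del: of_real_divide)
  then have "0 \<le> complex_of_real (1 / pS w S) * (\<Sum>i\<in>S. \<Sum>j\<in>S. w$i * cnj (w$j) * a$j$i)"
    using h by (rule mult_nonneg_nonneg)
  then show "0 \<le> psi w S a" unfolding psi_def by (simp add: divide_inverse mult.commute)
next
  have "(\<Sum>i\<in>S. \<Sum>j\<in>S. w$i * cnj (w$j) * (mat 1 :: complex^'n^'n)$j$i) = (\<Sum>i\<in>S. w$i * cnj (w$i))"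
    by (simp add: mat_def if_distrib sum.If_cases) 
  also have "\<dots> = complex_of_real (pS w S)" unfolding pS_def wcnj by simp
  finally show "psi w S (mat 1) = 1" unfolding psi_def using assms by simp
qed

lemma r1p[simp]: "rank_one_proj (w::complex^'n::finite) $ i $ j = w$i * cnj(w$j)"
  unfolding rank_one_proj_def by simp

lemma dd: "(\<Sum>i\<in>(UNIV::'n::finite set). \<Sum>k\<in>UNIV. if k = a \<and> i = a then c else (0::complex)) = c"
proof -
  have "\<And>i. (\<Sum>k\<in>UNIV. if k = a \<and> i = a then c else 0) = (if i = a then c else 0)"
    by (cases "i = a") auto
  then show ?thesis by simp
qed

theorem lemma4p14:
  fixes w :: "complex^'n::finite"
    and R :: "('n \<times> 'n) set"
  assumes "norm w = 1"
    and "\<forall>i. w $ i \<noteq> 0"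
    and "tolerance R"
    and "is_pure_state R (\<lambda>a. trace (trunc R (rank_one_proj w) ** a))"
  shows "graph_connected R"
proof (rule ccontr)
  assume "\<not> graph_connected R"
  then obtain i0 j1 where nr: "(i0, j1) \<notin> (graph_edges R)\<^sup>*"
    unfolding graph_connected_def by blast
  have reflR: "\<And>i. (i, i) \<in> R" and symR: "\<And>i j. (i, j) \<in> R \<Longrightarrow> (j, i) \<in> R"
    using assms(3) unfolding tolerance_def refl_on_def sym_def by auto
  define S where "S = {j. (i0, j) \<in> (graph_edges R)\<^sup>*}"
  have cl1: "j \<in> S" if "(i, j) \<in> R" "i \<in> S" for i j
  proof (cases "i = j")
    case False
    then have "(i, j) \<in> graph_edges R" using that unfolding graph_edges_def by simp
    then show ?thesis using that(2) unfolding S_def by (simp add: rtrancl_into_rtrancl)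
  qed (use that in simp)
  have cl: "(i \<in> S) = (j \<in> S)" if "(i, j) \<in> R" for i j
    using cl1[OF that] cl1[OF symR[OF that]] by blast
  have i0S: "i0 \<in> S" unfolding S_def by simp
  have j1S: "j1 \<notin> S" using nr unfolding S_def by simp
  have sq: "(\<Sum>i\<in>UNIV. (cmod (w$i))\<^sup>2) = 1"
    using assms(1) unfolding norm_vec_def L2_set_def by simp
  have tot: "pS w S + pS w (-S) = 1"
    unfolding pS_def using sq sum.union_disjoint[of S "-S" "\<lambda>i. (cmod (w$i))\<^sup>2"]
    by simp
  have pos: "pS w T > 0" if "i \<in> T" for i T
  proof -
    have "(cmod (w$i))\<^sup>2 \<le> pS w T"
      unfolding pS_def using that by (intro member_le_sum) auto
    moreover have "(cmod (w$i))\<^sup>2 > 0" using assms(2) by simp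
    ultimately show ?thesis by linarith
  qed
  have p1: "pS w S > 0" using pos[OF i0S] .
  have p2: "pS w (-S) > 0" using pos[of j1 "-S"] j1S by simp
  define \<phi> where "\<phi> = (\<lambda>a. trace (trunc R (rank_one_proj w) ** a))"
  define h where "h = (\<lambda>a i k. w$i * cnj (w$k) * a$k$i)"
  have dec: "\<phi> a = complex_of_real (pS w S) * psi w S a + complex_of_real (1 - pS w S) * psi w (-S) a"
    if "a \<in> opsys R" for a
  proof -
    have "\<phi> a = (\<Sum>i\<in>UNIV. \<Sum>k\<in>UNIV. (if (i, k) \<in> R then w$i * cnj (w$k) else 0) * a$k$i)"
      unfolding \<phi>_def trace_def matrix_matrix_mult_def trunc_def by (simp cong: if_cong)
    also have "\<dots> = (\<Sum>i\<in>UNIV. \<Sum>k\<in>UNIV. if (i \<in> S) = (k \<in> S) then h a i k else 0)"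
    proof (intro sum.cong refl)
      fix i k
      show "(if (i, k) \<in> R then w$i * cnj (w$k) else 0) * a$k$i = (if (i \<in> S) = (k \<in> S) then h a i k else 0)"
      proof (cases "(i, k) \<in> R")
        case True then show ?thesis using cl[OF True] unfolding h_def by simp
      next
        case False
        then have "(k, i) \<notin> R" using symR by blast
        then have "a$k$i = 0" using that unfolding opsys_def by blast
        then show ?thesis unfolding h_def by simp
      qed
    qed
    also have "\<dots> = (\<Sum>i\<in>UNIV. if i \<in> S then (\<Sum>k\<in>S. h a i k) else (\<Sum>k\<in>-S. h a i k))"
    proof (intro sum.cong refl)
      fix i
      show "(\<Sum>k\<in>UNIV. if (i \<in> S) = (k \<in> S) then h a i k else 0) = (if i \<in> S then (\<Sum>k\<in>S. h a i k) else (\<Sum>k\<in>-S. h a i k))"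
      proof (cases "i \<in> S")
        case True
        then have "(\<Sum>k\<in>UNIV. if (i \<in> S) = (k \<in> S) then h a i k else 0) = (\<Sum>k\<in>UNIV. if k \<in> S then h a i k else 0)"
          by simp
        also have "\<dots> = (\<Sum>k\<in>S. h a i k)" by (simp add: sum.If_cases)
        finally show ?thesis using True by simp
      next
        case False
        then have "(\<Sum>k\<in>UNIV. if (i \<in> S) = (k \<in> S) then h a i k else 0) = (\<Sum>k\<in>UNIV. if k \<in> S then 0 else h a i k)"
          by (intro sum.cong) auto
        also have "\<dots> = (\<Sum>k\<in>-S. h a i k)" by (simp add: sum.If_cases Compl_eq_Diff_UNIV)
        finally show ?thesis using False by simp
      qed
    qed
    also have "\<dots> = (\<Sum>i\<in>S. \<Sum>k\<in>S. h a i k) + (\<Sum>i\<in>-S. \<Sum>k\<in>-S. h a i k)"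
      by (simp add: sum.If_cases Compl_eq_Diff_UNIV)
    also have "\<dots> = complex_of_real (pS w S) * psi w S a + complex_of_real (1 - pS w S) * psi w (-S) a"
    proof -
      have q: "1 - pS w S = pS w (-S)" using tot by linarith
      have n1: "complex_of_real (pS w S) \<noteq> 0" "complex_of_real (pS w (-S)) \<noteq> 0" using p1 p2 by auto
      show ?thesis unfolding q psi_def h_def using n1 by simp
    qed
    finally show ?thesis .
  qed
  have pure: "is_pure_state R \<phi>" using assms(4) unfolding \<phi>_def .
  have t01: "0 < pS w S" "pS w S < 1" using p1 p2 tot by linarith+
  have all: "\<forall>a\<in>opsys R. psi w S a = \<phi> a \<and> psi w (-S) a = \<phi> a"
  proof -
    have "\<forall>\<phi>1 \<phi>2 (t::real). is_state R \<phi>1 \<and> is_state R \<phi>2 \<and> 0 < t \<and> t < 1 \<and>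
        (\<forall>a\<in>opsys R. \<phi> a = t * \<phi>1 a + (1 - t) * \<phi>2 a)
        \<longrightarrow> (\<forall>a\<in>opsys R. \<phi>1 a = \<phi> a \<and> \<phi>2 a = \<phi> a)"
      using pure unfolding is_pure_state_def by blast
    then have "is_state R (psi w S) \<and> is_state R (psi w (-S)) \<and> 0 < complex_of_real (pS w S) \<and> complex_of_real (pS w S) < 1 \<and>
        (\<forall>a\<in>opsys R. \<phi> a = complex_of_real (pS w S) * psi w S a + (1 - complex_of_real (pS w S)) * psi w (-S) a)
        \<longrightarrow> (\<forall>a\<in>opsys R. psi w S a = \<phi> a \<and> psi w (-S) a = \<phi> a)"
      by (elim allE)
    moreover have "is_state R (psi w S)" by (rule psi_state[OF p1])
    moreover have "is_state R (psi w (-S))" by (rule psi_state[OF p2])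
    moreover have "0 < complex_of_real (pS w S)" "complex_of_real (pS w S) < 1"
      using t01 by (simp_all add: less_complex_def)
    moreover have "\<forall>a\<in>opsys R. \<phi> a = complex_of_real (pS w S) * psi w S a + (1 - complex_of_real (pS w S)) * psi w (-S) a"
      using dec by simp
    ultimately show ?thesis by blast
  qed
  define E :: "complex^'n^'n" where "E = (\<chi> i j. if i = i0 \<and> j = i0 then 1 else 0)"
  have EO: "E \<in> opsys R" unfolding E_def opsys_def using reflR by auto
  have "psi w (-S) E = 0" unfolding psi_def E_def using i0S by (auto intro!: sum.neutral)
  moreover have "\<phi> E = w$i0 * cnj (w$i0)"
    unfolding \<phi>_def trace_def matrix_matrix_mult_def trunc_def E_def
    using reflR by (simp add: dd if_distrib[where f="\<lambda>z. _ * z"] cong: if_cong)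
  moreover have "w$i0 * cnj (w$i0) \<noteq> 0" using assms(2) by simp
  ultimately show False using all EO by auto
qed
end
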